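(* Let $u:2^{[n]} \rightarrow \mathbb{R}_{\geq 0}$ be a (monotone, normalized) submodular and second-order supermodular set function and let $c:2^{[n]} \rightarrow \mathbb{R}_{\geq 0}$ be a modular set function with positive item costs. If the local search algorithm converges before terminating, i.e., it reaches a permutation $\pi$ such that no neighbor of $\pi$ (a permutation obtained by removing the element in some position $i$ of $\pi$ and reinserting it in some position $j$) has strictly smaller objective value, then the permutation it returns is a $4$-approximation to Min-Sum Submodular Cover on $u$ and $c$.
   Context: Min-Sum Submodular Cover: given a positive integer $n$, a monotone submodular utility function $u:2^{[n]} \rightarrow \mathbb{R}_{\geq 0}$ with $u(\emptyset)=0$, and positive costs $c_1,\ldots,c_n$ defining the modular cost function $c(S)=\sum_{i\in S} c_i$, find a permutation of $[n]$ minimizing $\sum_{i=1}^{n} c(S_i)\,(u(S_i)-u(S_{i-1}))$, where $S_i$ is the set of the first $i$ elements of the permutation (and $S_0=\emptyset$). Notation: $f(e|S) := f(S\cup\{e\})-f(S)$. The function $u$ is submodular if $u(i|S) \geq u(i|S\cup\{j\})$, and second-order supermodular if $u(i|S) - u(i|S \cup \{j\}) \geq u(i|S \cup \{k\}) - u(i|S \cup \{k,j\})$, for all $S\subseteq[n]$ and $i,j,k \in [n]\setminus S$. The local search algorithm: given $\epsilon>0$ and an initial $d$-approximate permutation $\pi$, repeat for up to $2n^3\log(d/\epsilon)$ iterations: among all neighbors $\pi'$ of $\pi$ (obtained by moving the element in position $i$ to position $j$, for $i,j\in[n]$), find one with lowest objective value; if its objective value is strictly less than that of $\pi$, replace $\pi$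 by it; otherwise the algorithm has converged and returns $\pi$. If the iteration budget is exhausted, it returns the current $\pi$. *)

theory Defs
  imports Complex_Main
begin

text \<open>Ground set [n] is rendered as {..<n} (elements 0,...,n-1).
  A permutation of [n] is a list with distinct entries whose set is {..<n}.\<close>

definition is_perm :: "nat \<Rightarrow> nat list \<Rightarrow> bool" where
  "is_perm n xs \<longleftrightarrow> distinct xs \<and> set xs = {..<n}"

definition cost :: "(nat \<Rightarrow> real) \<Rightarrow> nat set \<Rightarrow> real" where
  "cost c S = (\<Sum>i\<in>S. c i)"

definition mssc_obj :: "(nat set \<Rightarrow> real) \<Rightarrow> (nat \<Rightarrow> real) \<Rightarrow> nat list \<Rightarrow> real" where
  "mssc_obj u c xs =
     (\<Sum>i=1..length xs. cost c (set (take i xs)) *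
        (u (set (take i xs)) - u (set (take (i - 1) xs))))"

definition move :: "nat \<Rightarrow> nat \<Rightarrow> 'a list \<Rightarrow> 'a list" where
  "move i j xs = (let x = xs ! i; ys = take i xs @ drop (Suc i) xs
                  in take j ys @ x # drop j ys)"

definition marg :: "(nat set \<Rightarrow> real) \<Rightarrow> nat \<Rightarrow> nat set \<Rightarrow> real" where
  "marg u e S = u (insert e S) - u S"

definition monotone_set_fun :: "nat \<Rightarrow> (nat set \<Rightarrow> real) \<Rightarrow> bool" where
  "monotone_set_fun n u \<longleftrightarrow> (\<forall>S T. S \<subseteq> T \<and> T \<subseteq> {..<n} \<longrightarrow> u S \<le> u T)"

definition submodular :: "nat \<Rightarrow> (nat set \<Rightarrow> real) \<Rightarrow> bool" where
  "submodular n u \<longleftrightarrow> (\<forall>S i j. S \<subseteq> {..<n} \<and> i \<in> {..<n} - S \<and> j \<in> {..<n} - S \<longrightarrow>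
      marg u i S \<ge> marg u i (S \<union> {j}))"

definition second_order_supermodular :: "nat \<Rightarrow> (nat set \<Rightarrow> real) \<Rightarrow> bool" where
  "second_order_supermodular n u \<longleftrightarrow>
     (\<forall>S i j k. S \<subseteq> {..<n} \<and> i \<in> {..<n} - S \<and> j \<in> {..<n} - S \<and> k \<in> {..<n} - S \<longrightarrow>
      marg u i S - marg u i (S \<union> {j}) \<ge> marg u i (S \<union> {k}) - marg u i (S \<union> {k, j}))"

end

theory Submission
  imports Defs
begin


lemma marg_mem: "x \<in> S \<Longrightarrow> marg u x S = 0"
  by (simp add: marg_def insert_absorb)

lemma marg_nonneg:
  assumes "monotone_set_fun n u" "S \<subseteq> {..<n}" "x < n"
  shows "marg u x S \<ge> 0"
proof -
  have "u S \<le> u (insert x S)" using assms unfolding monotone_set_fun_def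
    by (metis insert_subset lessThan_iff subset_insertI)
  then show ?thesis by (simp add: marg_def)
qed

lemma marg_anti_aux:
  assumes mono: "monotone_set_fun n u" and sub: "submodular n u"
  shows "finite D \<Longrightarrow> A \<union> D \<subseteq> {..<n} \<Longrightarrow> x < n \<Longrightarrow> marg u x (A \<union> D) \<le> marg u x A"
proof (induction D rule: finite_induct)
  case empty
  then show ?case by simp
next
  case (insert d D)
  have IH: "marg u x (A \<union> D) \<le> marg u x A" using insert by auto
  have "marg u x (A \<union> insert d D) \<le> marg u x (A \<union> D)"
  proof (cases "x \<in> A \<union> D")
    case True
    then show ?thesis by (simp add: marg_mem)
  next
    case False
    show ?thesis
    proof (cases "d \<in> A \<union> D")
      case True
      then show ?thesis by (simp add: insert_absorb)
    next
      case False2: False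
      have "marg u x ((A \<union> D) \<union> {d}) \<le> marg u x (A \<union> D)"
        using sub False False2 insert.prems unfolding submodular_def by auto
      then show ?thesis by simp
    qed
  qed
  with IH show ?case by linarith
qed

lemma marg_anti:
  assumes mono: "monotone_set_fun n u" and sub: "submodular n u"
    and "A \<subseteq> B" "B \<subseteq> {..<n}" "x < n"
  shows "marg u x B \<le> marg u x A"
proof -
  have "finite (B - A)" using assms(4) finite_subset by blast
  moreover have "B = A \<union> (B - A)" using assms(3) by blast
  ultimately show ?thesis using marg_anti_aux[OF mono sub, of "B - A" A x] assms by auto
qed

fun G :: "(nat set \<Rightarrow> real) \<Rightarrow> (nat \<Rightarrow> real) \<Rightarrow> real \<Rightarrow> nat set \<Rightarrow> nat list \<Rightarrow> real" where
  "G u c U B [] = 0"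
| "G u c U B (y # ys) = c y * (U - u B) + G u c U (insert y B) ys"

lemma G_append: "G u c U B (xs @ ys) = G u c U B xs + G u c U (B \<union> set xs) ys"
  by (induction xs arbitrary: B) auto

lemma G_U: "G u c U B xs = G u c U' B xs + (U - U') * sum_list (map c xs)"
  by (induction xs arbitrary: B) (auto simp: algebra_simps)

lemma G_index: "G u c U B xs = (\<Sum>i<length xs. c (xs!i) * (U - u (B \<union> set (take i xs))))"
proof (induction xs arbitrary: B)
  case Nil
  then show ?case by simp
next
  case (Cons y ys)
  show ?case
    by (simp add: Cons sum.lessThan_Suc_shift del: sum.lessThan_Suc)
qed

lemma obj_G: "distinct xs \<Longrightarrow> mssc_obj u c xs = G u c (u (set xs)) {} xs"
proof (induction xs rule: rev_induct)
  case Nil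
  then show ?case by (simp add: mssc_obj_def)
next
  case (snoc y xs)
  let ?m = "length xs"
  have d: "distinct xs" "y \<notin> set xs" using snoc.prems by auto
  have "mssc_obj u c (xs @ [y]) =
     (\<Sum>i=1..?m. cost c (set (take i (xs@[y]))) *
        (u (set (take i (xs@[y]))) - u (set (take (i - 1) (xs@[y])))))
     + cost c (set (xs @ [y])) * (u (set (xs@[y])) - u (set xs))"
    unfolding mssc_obj_def by simp
  also have "(\<Sum>i=1..?m. cost c (set (take i (xs@[y]))) *
        (u (set (take i (xs@[y]))) - u (set (take (i - 1) (xs@[y]))))) = mssc_obj u c xs"
    unfolding mssc_obj_def by (rule sum.cong) auto
  finally have e1: "mssc_obj u c (xs @ [y]) = mssc_obj u c xs
       + cost c (set (xs @ [y])) * (u (set (xs@[y])) - u (set xs))" .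
  have cs: "cost c (set (xs @ [y])) = sum_list (map c xs) + c y"
    using d by (simp add: cost_def sum_list_distinct_conv_sum_set)
  have "G u c (u (set (xs@[y]))) {} (xs @ [y]) = G u c (u (set (xs@[y]))) {} xs + c y * (u (set (xs@[y])) - u (set xs))"
    by (simp add: G_append)
  also have "G u c (u (set (xs@[y]))) {} xs = G u c (u (set xs)) {} xs + (u (set (xs@[y])) - u (set xs)) * sum_list (map c xs)"
    by (rule G_U)
  finally show ?case using e1 cs snoc.IH d by (simp add: algebra_simps)
qed



lemma move_split:
  assumes "k < j" "j < length xs"
  shows "move j k xs = take k xs @ xs!j # drop k (take j xs) @ drop (Suc j) xs"
  using assms by (simp add: move_def Let_def take_append drop_append min_def)

lemma orig_split:
  assumes "k < j" "j < length xs"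
  shows "xs = take k xs @ drop k (take j xs) @ xs!j # drop (Suc j) xs"
proof -
  have "xs = take j xs @ xs!j # drop (Suc j) xs" using assms by (simp add: id_take_nth_drop)
  moreover have "take j xs = take k xs @ drop k (take j xs)"
    using assms by (metis append_take_drop_id less_imp_le_nat min.absorb1 take_take)
  ultimately show ?thesis by (metis append.assoc)
qed

lemma move_ineq:
  assumes dist: "distinct xs" and kj: "k < j" and jl: "j < length xs"
    and lo: "\<not> (mssc_obj u c (move j k xs) < mssc_obj u c xs)"
  shows "(\<Sum>i\<in>{k..<j}. c (xs!i) * marg u (xs!j) (set (take i xs)))
         \<le> c (xs!j) * (u (set (take j xs)) - u (set (take k xs)))"
proof -
  define L where "L = take k xs"
  define M where "M = drop k (take j xs)"
  define T where "T = drop (Suc j) xs"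
  define x where "x = xs!j"
  define U where "U = u (set xs)"
  have e1: "xs = L @ M @ x # T" unfolding L_def M_def T_def x_def using orig_split[OF kj jl] .
  have e2: "move j k xs = L @ x # M @ T" unfolding L_def M_def T_def x_def using move_split[OF kj jl] .
  have d2: "distinct (L @ x # M @ T)"
  proof -
    have "distinct (L @ M @ x # T)" using dist e1 by simp
    then show ?thesis by auto
  qed
  have s2: "set (L @ x # M @ T) = set xs"
  proof -
    have "set xs = set (L @ M @ x # T)" using e1 by metis
    then show ?thesis by auto
  qed
  have o1: "mssc_obj u c xs = G u c U {} L + G u c U (set L) M + c x * (U - u (set L \<union> set M))
            + G u c U (insert x (set L \<union> set M)) T"
  proof -
    have "mssc_obj u c xs = G u c U {} (L @ M @ x # T)" using obj_G[OF dist] U_def e1 by metis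
    then show ?thesis by (simp add: G_append Un_assoc)
  qed
  have o2: "mssc_obj u c (move j k xs) = G u c U {} L + c x * (U - u (set L)) + G u c U (insert x (set L)) M
            + G u c U (insert x (set L \<union> set M)) T"
    unfolding e2 using obj_G[OF d2] s2 U_def by (simp add: G_append)
  have key: "G u c U (set L) M - G u c U (insert x (set L)) M \<le> c x * (u (set L \<union> set M) - u (set L))"
    using lo o1 o2 by (simp add: algebra_simps)
  have lM: "length M = j - k" unfolding M_def using kj jl by simp
  have "G u c U (set L) M - G u c U (insert x (set L)) M
      = (\<Sum>i<j-k. c (M!i) * (u (insert x (set L \<union> set (take i M))) - u (set L \<union> set (take i M))))"
    by (simp add: G_index lM sum_subtractf[symmetric] algebra_simps)
  also have "\<dots> = (\<Sum>i<j-k. c (xs!(k+i)) * marg u x (set (take (k+i) xs)))"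
  proof (rule sum.cong)
    fix i assume "i \<in> {..<j-k}"
    then have i: "i < j - k" by simp
    have "M!i = xs!(k+i)" unfolding M_def using i kj jl by simp
    moreover have "set L \<union> set (take i M) = set (take (k+i) xs)"
    proof -
      have "take i M = take i (drop k xs)" unfolding M_def using i by (simp add: drop_take min_def)
      then have "L @ take i M = take (k+i) xs" unfolding L_def by (simp add: take_add)
      then show ?thesis by (metis set_append)
    qed
    ultimately show "c (M!i) * (u (insert x (set L \<union> set (take i M))) - u (set L \<union> set (take i M)))
        = c (xs!(k+i)) * marg u x (set (take (k+i) xs))" by (simp add: marg_def)
  qed simp
  also have "\<dots> = (\<Sum>i\<in>{k..<j}. c (xs!i) * marg u x (set (take i xs)))"
  proof -
    have "{k..<j} = (\<lambda>i. k + i) ` {..<j-k}"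
    proof (rule set_eqI, rule iffI)
      fix y assume "y \<in> {k..<j}"
      then have "y = k + (y - k)" "y - k \<in> {..<j-k}" by auto
      then show "y \<in> (\<lambda>i. k + i) ` {..<j-k}" by blast
    qed auto
    then show ?thesis by (simp add: sum.reindex inj_on_def)
  qed
  finally have "(\<Sum>i\<in>{k..<j}. c (xs!i) * marg u x (set (take i xs)))
      \<le> c x * (u (set L \<union> set M) - u (set L))" using key by simp
  moreover have "set L \<union> set M = set (take j xs)"
    unfolding L_def M_def by (metis append_take_drop_id kj less_imp_le_nat min.absorb1 set_append take_take)
  ultimately show ?thesis unfolding x_def L_def by simp
qed



lemma perm_len: "is_perm n xs \<Longrightarrow> length xs = n"
  unfolding is_perm_def by (metis card_lessThan distinct_card)

lemma take_sub: "is_perm n xs \<Longrightarrow> set (take i xs) \<subseteq> {..<n}"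
  unfolding is_perm_def by (metis set_take_subset)

lemma obj_index: "is_perm n xs \<Longrightarrow>
   mssc_obj u c xs = (\<Sum>i<n. c (xs!i) * (u {..<n} - u (set (take i xs))))"
  using obj_G[of xs u c] G_index[of u c "u (set xs)" "{}" xs] perm_len[of n xs]
  unfolding is_perm_def by simp

theorem theorem1:
  fixes n :: nat and u :: "nat set \<Rightarrow> real" and c :: "nat \<Rightarrow> real" and \<pi> :: "nat list"
  assumes nonneg: "\<forall>S. S \<subseteq> {..<n} \<longrightarrow> u S \<ge> 0"
    and norm: "u {} = 0"
    and mono: "monotone_set_fun n u"
    and submod: "submodular n u"
    and sos: "second_order_supermodular n u"
    and cpos: "\<forall>i<n. c i > 0"
    and perm: "is_perm n \<pi>"
    and locopt: "\<forall>i<n. \<forall>j<n. \<not> (mssc_obj u c (move i j \<pi>) < mssc_obj u c \<pi>)"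
  shows "\<forall>\<sigma>. is_perm n \<sigma> \<longrightarrow> mssc_obj u c \<pi> \<le> 4 * mssc_obj u c \<sigma>"
proof (intro allI impI)
  fix \<sigma> assume ps: "is_perm n \<sigma>"
  define U where "U = u {..<n}"
  define S where "S i = set (take i \<pi>)" for i
  define P where "P q = set (take q \<sigma>)" for q
  define R where "R i = U - u (S i)" for i
  define \<rho> where "\<rho> q = U - u (P q)" for q
  define h where "h q i = marg u (\<sigma>!q) (S i \<union> P q)" for q i
  define w where "w q = u (P (Suc q)) - u (P q)" for q
  have lp: "length \<pi> = n" using perm perm_len by blast
  have ls: "length \<sigma> = n" using ps perm_len by blast
  have Ssub: "S i \<subseteq> {..<n}" for i unfolding S_def using take_sub[OF perm] .
  have Psub: "P q \<subseteq> {..<n}" for q unfolding P_def using take_sub[OF ps] .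
  have umono: "A \<subseteq> B \<Longrightarrow> B \<subseteq> {..<n} \<Longrightarrow> u A \<le> u B" for A B
    using mono unfolding monotone_set_fun_def by blast
  have cnn: "x < n \<Longrightarrow> c x \<ge> 0" for x using cpos by (simp add: less_imp_le)
  have pin: "i < n \<Longrightarrow> \<pi>!i < n" for i using perm lp unfolding is_perm_def by (metis lessThan_iff nth_mem)
  have sin: "q < n \<Longrightarrow> \<sigma>!q < n" for q using ps ls unfolding is_perm_def by (metis lessThan_iff nth_mem)
  have Rnn: "R i \<ge> 0" for i unfolding R_def U_def using umono[OF Ssub] by simp
  have \<rho>nn: "\<rho> q \<ge> 0" for q unfolding \<rho>_def U_def using umono[OF Psub] by simp
  have Rn: "R n = 0" unfolding R_def S_def U_def using perm lp unfolding is_perm_def by simp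
  have Pn: "P n = {..<n}" unfolding P_def using ps ls unfolding is_perm_def by simp
  have \<rho>anti: "q \<le> q' \<Longrightarrow> \<rho> q' \<le> \<rho> q" for q q'
    unfolding \<rho>_def P_def using umono[OF set_take_subset_set_take take_sub[OF ps]] by simp
  have PSuc: "q < n \<Longrightarrow> P (Suc q) = insert (\<sigma>!q) (P q)" for q
    unfolding P_def using ls by (simp add: take_Suc_conv_app_nth)
  have SSuc: "j < n \<Longrightarrow> S (Suc j) = insert (\<pi>!j) (S j)" for j
    unfolding S_def using lp by (simp add: take_Suc_conv_app_nth)

  have ALG: "mssc_obj u c \<pi> = (\<Sum>i<n. c (\<pi>!i) * R i)"
    using obj_index[OF perm] unfolding R_def S_def U_def by simp
  have OPT: "mssc_obj u c \<sigma> = (\<Sum>q<n. c (\<sigma>!q) * \<rho> q)"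
    using obj_index[OF ps] unfolding \<rho>_def P_def U_def by simp

  have F1: "(\<Sum>q<n. h q i) = R i" for i
  proof -
    have "(\<Sum>q<n. h q i) = (\<Sum>q<n. u (S i \<union> P (Suc q)) - u (S i \<union> P q))"
      by (rule sum.cong) (auto simp: h_def marg_def PSuc)
    also have "\<dots> = u (S i \<union> P n) - u (S i \<union> P 0)" by (rule sum_lessThan_telescope)
    also have "\<dots> = R i" unfolding R_def U_def Pn using Ssub[of i] by (simp add: P_def sup.absorb2)
    finally show ?thesis .
  qed

  have Bnd: "(\<Sum>q<n. if \<rho> q < z then w q else 0) \<le> z" if z0: "z \<ge> 0" for z
  proof (cases "\<exists>q<n. \<rho> q < z")
    case False
    then have "(\<Sum>q<n. if \<rho> q < z then w q else 0) = 0" by (intro sum.neutral) auto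
    then show ?thesis using z0 by simp
  next
    case True
    define q0 where "q0 = (LEAST q. q < n \<and> \<rho> q < z)"
    have q0: "q0 < n" "\<rho> q0 < z" using LeastI_ex[OF True] unfolding q0_def by auto
    have iff: "q < n \<Longrightarrow> (\<rho> q < z) = (q0 \<le> q)" for q
    proof
      assume "q < n" "\<rho> q < z" then show "q0 \<le> q" unfolding q0_def by (simp add: Least_le)
    next
      assume "q0 \<le> q" then show "\<rho> q < z" using \<rho>anti[of q0 q] q0 by simp
    qed
    have "(\<Sum>q<n. if \<rho> q < z then w q else 0) = (\<Sum>q\<in>{q0..<n}. w q)"
      by (rule sum.mono_neutral_cong_right) (auto simp: iff)
    also have "\<dots> = u (P n) - u (P q0)" unfolding w_def using q0 by (intro sum_Suc_diff') simp
    also have "\<dots> = \<rho> q0" unfolding \<rho>_def U_def Pn ..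
    finally show ?thesis using q0 by simp
  qed

  have PP: "(\<Sum>i\<in>{k..<n}. c (\<pi>!i) * h q i) \<le> c (\<sigma>!q) * R k" if qn: "q < n" and kn: "k \<le> n" for q k
  proof -
    define x where "x = \<sigma>!q"
    have xn: "x < n" unfolding x_def using sin qn .
    then have "x \<in> set \<pi>" using perm unfolding is_perm_def by simp
    then obtain j where jn: "j < n" and pj: "\<pi>!j = x" using lp by (metis in_set_conv_nth)
    have cx: "c x > 0" using cpos xn by simp
    have h0: "h q i = 0" if "j < i" for i
    proof -
      have "x \<in> S i" unfolding S_def using that jn lp pj
        by (metis in_set_conv_nth length_take min_less_iff_conj nth_take)
      then show ?thesis unfolding h_def x_def by (simp add: marg_mem)
    qed
    show ?thesis
    proof (cases "j < k")
      case True
      have "(\<Sum>i\<in>{k..<n}. c (\<pi>!i) * h q i) = 0" using True by (intro sum.neutral) (auto simp: h0)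
      then show ?thesis using Rnn[of k] cx unfolding x_def by simp
    next
      case False
      then have kj: "k \<le> j" by simp
      have hle: "h q i \<le> marg u x (S i)" for i
        unfolding h_def x_def using marg_anti[OF mono submod, of "S i" "S i \<union> P q" "\<sigma>!q"] Ssub Psub xn x_def
        by auto
      have A: "(\<Sum>i\<in>{k..<j}. c (\<pi>!i) * h q i) \<le> c x * (u (S j) - u (S k))"
      proof -
        have "(\<Sum>i\<in>{k..<j}. c (\<pi>!i) * h q i) \<le> (\<Sum>i\<in>{k..<j}. c (\<pi>!i) * marg u x (S i))"
          using jn by (intro sum_mono mult_left_mono hle cnn pin) auto
        also have "\<dots> \<le> c x * (u (S j) - u (S k))"
        proof (cases "k < j")
          case True
          have "\<not> (mssc_obj u c (move j k \<pi>) < mssc_obj u c \<pi>)" using locopt jn True by simp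
          from move_ineq[OF _ True _ this] perm lp jn pj show ?thesis
            unfolding S_def is_perm_def by simp
        next
          case False
          then show ?thesis using kj by simp
        qed
        finally show ?thesis .
      qed
      have B: "c (\<pi>!j) * h q j \<le> c x * (u (S (Suc j)) - u (S j))"
        using hle[of j] cx pj SSuc[OF jn] by (simp add: marg_def)
      have "(\<Sum>i\<in>{k..<n}. c (\<pi>!i) * h q i) = (\<Sum>i\<in>{k..<j}. c (\<pi>!i) * h q i) + (\<Sum>i\<in>{j..<n}. c (\<pi>!i) * h q i)"
        using kj jn by (simp add: sum.atLeastLessThan_concat)
      also have "(\<Sum>i\<in>{j..<n}. c (\<pi>!i) * h q i) = c (\<pi>!j) * h q j + (\<Sum>i\<in>{Suc j..<n}. c (\<pi>!i) * h q i)"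
        using jn by (simp add: sum.atLeast_Suc_lessThan)
      also have "(\<Sum>i\<in>{Suc j..<n}. c (\<pi>!i) * h q i) = 0" by (intro sum.neutral) (auto simp: h0)
      finally have "(\<Sum>i\<in>{k..<n}. c (\<pi>!i) * h q i) \<le> c x * (u (S (Suc j)) - u (S k))"
        using A B by (simp add: algebra_simps)
      also have "\<dots> \<le> c x * R k"
        unfolding R_def U_def using cx umono[OF Ssub[of "Suc j"]] by (intro mult_left_mono) auto
      finally show ?thesis unfolding x_def .
    qed
  qed

  define K where "K q = (LEAST k. R k \<le> 2 * \<rho> q)" for q
  have Kle: "K q \<le> n" for q
    unfolding K_def by (rule Least_le[of "\<lambda>k. R k \<le> 2 * \<rho> q" n]) (simp add: Rn \<rho>nn)
  have KR: "R (K q) \<le> 2 * \<rho> q" for q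
    unfolding K_def by (rule LeastI[of "\<lambda>k. R k \<le> 2 * \<rho> q" n]) (simp add: Rn \<rho>nn)
  have Klt: "2 * \<rho> q < R i" if iK: "i < K q" for i q
  proof -
    have "\<not> R i \<le> 2 * \<rho> q" using iK unfolding K_def by (rule not_less_Least)
    then show ?thesis by simp
  qed

  define f where "f q i = c (\<pi>!i) * h q i" for q i
  have split: "(\<Sum>i<n. f q i) = (\<Sum>i<n. if i < K q then f q i else 0) + (\<Sum>i\<in>{K q..<n}. f q i)" for q
  proof -
    have "(\<Sum>i<n. f q i) = (\<Sum>i<n. (if i < K q then f q i else 0) + (if i < K q then 0 else f q i))"
      by (rule sum.cong) auto
    also have "\<dots> = (\<Sum>i<n. if i < K q then f q i else 0) + (\<Sum>i<n. if i < K q then 0 else f q i)"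
      by (rule sum.distrib)
    also have "(\<Sum>i<n. if i < K q then 0 else f q i) = (\<Sum>i\<in>{K q..<n}. f q i)"
      by (rule sum.mono_neutral_cong_right) auto
    finally show ?thesis .
  qed

  have "mssc_obj u c \<pi> = (\<Sum>i<n. c (\<pi>!i) * (\<Sum>q<n. h q i))" unfolding ALG F1 ..
  also have "\<dots> = (\<Sum>i<n. \<Sum>q<n. f q i)"
    unfolding f_def by (simp add: sum_distrib_left)
  also have "\<dots> = (\<Sum>q<n. \<Sum>i<n. f q i)"
    by (rule sum.swap)
  also have "\<dots> = (\<Sum>q<n. \<Sum>i<n. if i < K q then f q i else 0) + (\<Sum>q<n. \<Sum>i\<in>{K q..<n}. f q i)"
    unfolding split sum.distrib ..
  finally have E: "mssc_obj u c \<pi> = (\<Sum>q<n. \<Sum>i<n. if i < K q then f q i else 0) + (\<Sum>q<n. \<Sum>i\<in>{K q..<n}. f q i)" .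

  have T2: "(\<Sum>q<n. \<Sum>i\<in>{K q..<n}. f q i) \<le> 2 * mssc_obj u c \<sigma>"
  proof -
    have "(\<Sum>q<n. \<Sum>i\<in>{K q..<n}. f q i) \<le> (\<Sum>q<n. c (\<sigma>!q) * (2 * \<rho> q))"
    proof (rule sum_mono)
      fix q assume "q \<in> {..<n}"
      then have q: "q < n" by simp
      have "(\<Sum>i\<in>{K q..<n}. f q i) \<le> c (\<sigma>!q) * R (K q)" unfolding f_def using PP[OF q Kle] .
      also have "\<dots> \<le> c (\<sigma>!q) * (2 * \<rho> q)" using KR[of q] cnn[OF sin[OF q]] by (rule mult_left_mono)
      finally show "(\<Sum>i\<in>{K q..<n}. f q i) \<le> c (\<sigma>!q) * (2 * \<rho> q)" .
    qed
    also have "\<dots> = 2 * mssc_obj u c \<sigma>" unfolding OPT by (simp add: sum_distrib_left algebra_simps)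
    finally show ?thesis .
  qed

  have T1: "(\<Sum>q<n. \<Sum>i<n. if i < K q then f q i else 0) \<le> mssc_obj u c \<pi> / 2"
  proof -
    have "(\<Sum>q<n. \<Sum>i<n. if i < K q then f q i else 0) = (\<Sum>i<n. \<Sum>q<n. if i < K q then f q i else 0)"
      by (rule sum.swap)
    also have "\<dots> = (\<Sum>i<n. c (\<pi>!i) * (\<Sum>q<n. if i < K q then h q i else 0))"
      unfolding f_def sum_distrib_left by (intro sum.cong refl) simp
    also have "\<dots> \<le> (\<Sum>i<n. c (\<pi>!i) * (R i / 2))"
    proof (rule sum_mono)
      fix i assume "i \<in> {..<n}"
      then have i: "i < n" by simp
      have "(\<Sum>q<n. if i < K q then h q i else 0) \<le> (\<Sum>q<n. if \<rho> q < R i / 2 then w q else 0)"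
      proof (rule sum_mono)
        fix q assume "q \<in> {..<n}"
        then have q: "q < n" by simp
        have hw: "h q i \<le> w q"
          unfolding h_def w_def using marg_anti[OF mono submod, of "P q" "S i \<union> P q" "\<sigma>!q"] Ssub Psub sin[OF q] PSuc[OF q]
          by (auto simp: marg_def)
        have w0: "w q \<ge> 0" unfolding w_def using marg_nonneg[OF mono Psub[of q] sin[OF q]] PSuc[OF q] by (simp add: marg_def)
        show "(if i < K q then h q i else 0) \<le> (if \<rho> q < R i / 2 then w q else 0)"
          using Klt[of i q] hw w0 by auto
      qed
      also have "\<dots> \<le> R i / 2" using Rnn[of i] by (intro Bnd) simp
      finally show "c (\<pi>!i) * (\<Sum>q<n. if i < K q then h q i else 0) \<le> c (\<pi>!i) * (R i / 2)"
        using cnn[OF pin[OF i]] by (rule mult_left_mono)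
    qed
    also have "\<dots> = mssc_obj u c \<pi> / 2" unfolding ALG by (simp add: sum_divide_distrib)
    finally show ?thesis .
  qed
  show "mssc_obj u c \<pi> \<le> 4 * mssc_obj u c \<sigma>" using E T1 T2 by linarith
qed

end
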